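(* Let $\mathcal{S}$ be a subspace of $\mathbb{C}^n$. Then $$\sup_{D\in\mathcal{D}^+_n}\|P_{D,\mathcal{S}}\|=\max\{\|P_{Q,\mathcal{S}}\|:Q\in\mathcal{P}(\mathcal{D}_n),\ R(Q)\veebar\mathcal{S}\}.$$
   Context: $\mathcal{D}_n$ is the algebra of $n\times n$ diagonal complex matrices, $\mathcal{D}^+_n$ its positive definite elements, $\mathcal{P}(\mathcal{D}_n)$ its orthogonal projections. Norms are operator norms for the Euclidean norm. For a positive semidefinite matrix $D$ and a subspace $\mathcal{S}$, write $D=\begin{pmatrix} a & b\\ b^* & c\end{pmatrix}$ with respect to $\mathcal{S}\oplus\mathcal{S}^\perp$ and set $P_{D,\mathcal{S}}:=\begin{pmatrix} 1 & a^\dagger b\\ 0&0\end{pmatrix}$ ($a^\dagger$ Moore–Penrose inverse). Two subspaces satisfy $\mathcal{T}\veebar\mathcal{S}$ if $\mathcal{T}^\perp\cap\mathcal{S}=\mathcal{T}\cap\mathcal{S}^\perp=\{0\}$. *)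

theory Defs
  imports "HOL-Analysis.Analysis"
begin

text \<open>The norm on complex ^'n is the Euclidean norm, and the matrix norm is the induced
  operator norm (onorm of the associated map).\<close>

definition cinner :: "complex ^'n \<Rightarrow> complex ^'n \<Rightarrow> complex" where
  "cinner x y = (\<Sum>i\<in>UNIV. x $ i * cnj (y $ i))"

definition adjoint_mat :: "complex ^'n ^'n \<Rightarrow> complex ^'n ^'n" where
  "adjoint_mat A = (\<chi> i j. cnj (A $ j $ i))"

definition csubspace :: "(complex ^'n) set \<Rightarrow> bool" where
  "csubspace S \<longleftrightarrow> 0 \<in> S \<and> (\<forall>x\<in>S. \<forall>y\<in>S. x + y \<in> S) \<and> (\<forall>c. \<forall>x\<in>S. c *s x \<in> S)"

definition corth :: "(complex ^'n) set \<Rightarrow> (complex ^'n) set" where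
  "corth S = {x. \<forall>y\<in>S. cinner x y = 0}"

definition mat_range :: "complex ^'n ^'n \<Rightarrow> (complex ^'n) set" where
  "mat_range A = range (\<lambda>x. A *v x)"

definition hermitian :: "complex ^'n ^'n \<Rightarrow> bool" where
  "hermitian A \<longleftrightarrow> adjoint_mat A = A"

definition is_orth_proj :: "complex ^'n ^'n \<Rightarrow> bool" where
  "is_orth_proj P \<longleftrightarrow> P ** P = P \<and> hermitian P"

definition orth_proj_onto :: "(complex ^'n) set \<Rightarrow> complex ^'n ^'n" where
  "orth_proj_onto S = (THE P. is_orth_proj P \<and> mat_range P = S)"

definition moore_penrose :: "complex ^'n ^'n \<Rightarrow> complex ^'n ^'n" where
  "moore_penrose A = (THE X. A ** X ** A = A \<and> X ** A ** X = X
      \<and> hermitian (A ** X) \<and> hermitian (X ** A))"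

definition is_diagonal :: "complex ^'n ^'n \<Rightarrow> bool" where
  "is_diagonal A \<longleftrightarrow> (\<forall>i j. i \<noteq> j \<longrightarrow> A $ i $ j = 0)"

definition pos_def :: "complex ^'n ^'n \<Rightarrow> bool" where
  "pos_def A \<longleftrightarrow> hermitian A \<and> (\<forall>x. x \<noteq> 0 \<longrightarrow> 0 < Re (cinner (A *v x) x))"

definition diag_pos :: "(complex ^'n ^'n) set" where
  "diag_pos = {D. is_diagonal D \<and> pos_def D}"

definition diag_proj :: "(complex ^'n ^'n) set" where
  "diag_proj = {Q. is_diagonal Q \<and> is_orth_proj Q}"

text \<open>P_{D,S}: with respect to S \<oplus> S^\<perp>, D = [[a,b],[b*,c]] and P_{D,S} = [[1, a^\<dagger> b],[0,0]].
  Written as an n x n matrix with E the orthogonal projection onto S: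
  a corresponds to E D E (a \<oplus> 0), b to E D (I - E), so that
  P_{D,S} = E + (E D E)^\<dagger> (E D (I - E)); note (E D E)^\<dagger> = a^\<dagger> \<oplus> 0.\<close>
definition oblique_proj :: "complex ^'n ^'n \<Rightarrow> (complex ^'n) set \<Rightarrow> complex ^'n ^'n" where
  "oblique_proj D S = (let E = orth_proj_onto S in
      E + moore_penrose (E ** D ** E) ** (E ** D ** (mat 1 - E)))"

definition opnorm :: "complex ^'n ^'n \<Rightarrow> real" where
  "opnorm A = onorm (\<lambda>x. A *v x)"

definition compl_pos :: "(complex ^'n) set \<Rightarrow> (complex ^'n) set \<Rightarrow> bool" where
  "compl_pos T S \<longleftrightarrow> corth T \<inter> S = {0} \<and> T \<inter> corth S = {0}"

end

theory Submission
  imports Defs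
begin


lemma cinner_add_left: "cinner (x + y) z = cinner x z + cinner y z"
  by (simp add: cinner_def distrib_right sum.distrib)
lemma cinner_add_right: "cinner x (y + z) = cinner x y + cinner x z"
  by (simp add: cinner_def distrib_left sum.distrib)
lemma cinner_diff_left: "cinner (x - y) z = cinner x z - cinner y z"
  by (simp add: cinner_def left_diff_distrib sum_subtractf)
lemma cinner_diff_right: "cinner x (y - z) = cinner x y - cinner x z"
  by (simp add: cinner_def right_diff_distrib sum_subtractf)
lemma cinner_scale_left: "cinner (c *s x) z = c * cinner x z"
  by (simp add: cinner_def sum_distrib_left mult.assoc)
lemma cinner_scale_right: "cinner x (c *s z) = cnj c * cinner x z"
  by (simp add: cinner_def sum_distrib_left algebra_simps)
lemma cinner_zero_left[simp]: "cinner 0 x = 0" by (simp add: cinner_def)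
lemma cinner_zero_right[simp]: "cinner x 0 = 0" by (simp add: cinner_def)
lemma cinner_cnj: "cnj (cinner x y) = cinner y x"
  by (simp add: cinner_def mult.commute)
lemma Re_cinner: "Re (cinner x y) = inner x y"
  by (simp add: cinner_def inner_vec_def inner_complex_def Re_sum)
lemma cinner_self: "cinner x x = of_real ((norm x)^2)"
proof -
  have "cinner x x = (\<Sum>i\<in>UNIV. of_real ((cmod (x$i))^2))"
    unfolding cinner_def by (intro sum.cong refl) (rule complex_norm_square[symmetric])
  also have "\<dots> = of_real (\<Sum>i\<in>UNIV. (cmod (x$i))^2)" by (rule of_real_sum[symmetric])
  also have "(\<Sum>i\<in>UNIV. (cmod (x$i))^2) = (norm x)^2"
    unfolding norm_vec_def L2_set_def by (simp add: sum_nonneg)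
  finally show ?thesis .
qed
lemma cinner_self_eq_0: "cinner x x = 0 \<longleftrightarrow> x = 0"
  by (simp add: cinner_self)
lemma cinner_axis_right: "cinner x (axis i 1) = x$i"
  by (simp add: cinner_def axis_def if_distrib cong: if_cong)
lemma cinner_axis_left: "cinner (axis i 1) x = cnj (x$i)"
  by (metis cinner_axis_right cinner_cnj)

lemma cinner_adjoint: "cinner (A *v x) y = cinner x (adjoint_mat A *v y)"
proof -
  have "cinner (A *v x) y = (\<Sum>i\<in>UNIV. \<Sum>j\<in>UNIV. A$i$j * x$j * cnj (y$i))"
    by (simp add: cinner_def matrix_vector_mult_def sum_distrib_right)
  also have "\<dots> = (\<Sum>j\<in>UNIV. \<Sum>i\<in>UNIV. A$i$j * x$j * cnj (y$i))" by (rule sum.swap)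
  also have "\<dots> = cinner x (adjoint_mat A *v y)"
    by (simp add: cinner_def adjoint_mat_def matrix_vector_mult_def sum_distrib_left mult_ac)
  finally show ?thesis .
qed

lemma adjoint_adjoint[simp]: "adjoint_mat (adjoint_mat A) = A"
  by (simp add: adjoint_mat_def vec_eq_iff)

lemma adjoint_mult: "adjoint_mat (A ** B) = adjoint_mat B ** adjoint_mat A"
  by (simp add: adjoint_mat_def matrix_matrix_mult_def vec_eq_iff mult.commute)

lemma scaleR_cvec: "r *\<^sub>R (x::complex^'n) = of_real r *s x"
  by (simp add: scaleR_vec_def vector_scalar_mult_def scaleR_conv_of_real)

lemma csubspace_diff: "csubspace S \<Longrightarrow> x \<in> S \<Longrightarrow> y \<in> S \<Longrightarrow> x - y \<in> S"
  unfolding csubspace_def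
  by (metis (no_types, lifting) add.commute diff_add_cancel scalar_mult_eq_scaleR vector_sneg_minus1 ab_group_add_class.ab_diff_conv_add_uminus)

lemma csubspace_zero: "csubspace S \<Longrightarrow> 0 \<in> S" by (simp add: csubspace_def)
lemma csubspace_add: "csubspace S \<Longrightarrow> x \<in> S \<Longrightarrow> y \<in> S \<Longrightarrow> x + y \<in> S" by (simp add: csubspace_def)
lemma csubspace_scale: "csubspace S \<Longrightarrow> x \<in> S \<Longrightarrow> c *s x \<in> S" by (simp add: csubspace_def)
lemma csubspace_scaleR: "csubspace S \<Longrightarrow> x \<in> S \<Longrightarrow> c *\<^sub>R x \<in> S" by (simp add: csubspace_def scaleR_cvec)

definition wip :: "('n \<Rightarrow> real) \<Rightarrow> complex^'n \<Rightarrow> complex^'n \<Rightarrow> complex" where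
  "wip d v s = (\<Sum>i\<in>UNIV. of_real (d i) * v$i * cnj (s$i))"
definition LS :: "(complex^'n) set \<Rightarrow> ('n \<Rightarrow> real) \<Rightarrow> complex^'n \<Rightarrow> complex^'n \<Rightarrow> bool" where
  "LS S d x y \<longleftrightarrow> y \<in> S \<and> (\<forall>s\<in>S. wip d (y - x) s = 0)"
definition adm :: "(complex^'n) set \<Rightarrow> ('n \<Rightarrow> real) \<Rightarrow> bool" where
  "adm S d \<longleftrightarrow> (\<forall>y\<in>S. (\<forall>i. d i \<noteq> 0 \<longrightarrow> y$i = 0) \<longrightarrow> y = 0)"
definition basic :: "(complex^'n) set \<Rightarrow> 'n set \<Rightarrow> bool" where
  "basic S J \<longleftrightarrow> (\<forall>y\<in>S. (\<forall>i\<in>J. y$i = 0) \<longrightarrow> y = 0)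
      \<and> (\<forall>w. (\<forall>i. i \<notin> J \<longrightarrow> w$i = 0) \<and> (\<forall>s\<in>S. cinner w s = 0) \<longrightarrow> w = 0)"
definition ind :: "'n set \<Rightarrow> 'n \<Rightarrow> real" where
  "ind J i = (if i \<in> J then 1 else 0)"
definition Bset :: "(complex^'n) set \<Rightarrow> complex^'n \<Rightarrow> (complex^'n) set" where
  "Bset S x = {z. \<exists>J. basic S J \<and> LS S (ind J) x z}"
definition active :: "(complex^'n) set \<Rightarrow> 'n set" where
  "active S = {i. \<exists>y\<in>S. y$i \<noteq> 0}"

lemma wip_add_left: "wip d (v + w) s = wip d v s + wip d w s"
  by (simp add: wip_def algebra_simps sum.distrib)
lemma wip_diff_left: "wip d (v - w) s = wip d v s - wip d w s"
  by (simp add: wip_def algebra_simps sum_subtractf)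
lemma wip_scaleR_left: "wip d (c *\<^sub>R v) s = of_real c * wip d v s"
  by (simp add: wip_def sum_distrib_left scaleR_cvec vector_scalar_mult_def mult_ac)
lemma wip_add_right: "wip d v (s + s') = wip d v s + wip d v s'"
  by (simp add: wip_def algebra_simps sum.distrib)
lemma wip_diff_right: "wip d v (s - s') = wip d v s - wip d v s'"
  by (simp add: wip_def algebra_simps sum_subtractf)
lemma wip_scale_right: "wip d v (c *s s) = cnj c * wip d v s"
  by (simp add: wip_def sum_distrib_left mult_ac)
lemma wip_split: "wip d v s = wip (d(j := 0)) v s + of_real (d j) * v$j * cnj (s$j)"
proof -
  have "wip d v s = (\<Sum>i\<in>UNIV. (if i = j then of_real (d j) * v$j * cnj (s$j) else 0)
      + of_real ((d(j:=0)) i) * v$i * cnj (s$i))"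
    unfolding wip_def by (intro sum.cong refl) auto
  also have "\<dots> = of_real (d j) * v$j * cnj (s$j) + wip (d(j := 0)) v s"
    unfolding wip_def sum.distrib by simp
  finally show ?thesis by simp
qed
lemma wip_self: "wip d v v = of_real (\<Sum>i\<in>UNIV. d i * (cmod (v$i))^2)"
proof -
  have "wip d v v = (\<Sum>i\<in>UNIV. of_real (d i * (cmod (v$i))^2))"
    unfolding wip_def
  proof (intro sum.cong refl)
    fix i
    have "of_real (d i) * v$i * cnj (v$i) = of_real (d i) * (v$i * cnj (v$i))" by simp
    also have "\<dots> = of_real (d i) * of_real ((cmod (v$i))^2)" by (simp only: complex_norm_square)
    finally show "of_real (d i) * v$i * cnj (v$i) = of_real (d i * (cmod (v$i))^2)" by simp
  qed
  also have "\<dots> = of_real (\<Sum>i\<in>UNIV. d i * (cmod (v$i))^2)" by (rule of_real_sum[symmetric])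
  finally show ?thesis .
qed
lemma wip_self_zero:
  assumes "\<forall>i. d i \<ge> 0" "wip d v v = 0"
  shows "d i \<noteq> 0 \<Longrightarrow> v$i = 0"
proof -
  assume di: "d i \<noteq> 0"
  have "complex_of_real (\<Sum>i\<in>UNIV. d i * (cmod (v$i))^2) = 0" using assms(2) wip_self[of d v] by metis
  then have s0: "(\<Sum>i\<in>UNIV. d i * (cmod (v$i))^2) = 0" by (simp only: of_real_eq_0_iff)
  have nn: "\<And>k. k \<in> UNIV \<Longrightarrow> 0 \<le> d k * (cmod (v$k))^2" using assms(1) by simp
  have "\<forall>k\<in>UNIV. d k * (cmod (v$k))^2 = 0"
    using sum_nonneg_eq_0_iff[of UNIV "\<lambda>k. d k * (cmod (v$k))^2"] nn s0 by simp
  then have "d i * (cmod (v$i))^2 = 0" by simp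
  then show "v$i = 0" using di by simp
qed

lemma LS_unique:
  assumes "csubspace S" "\<forall>i. d i \<ge> 0" "adm S d" "LS S d x y1" "LS S d x y2"
  shows "y1 = y2"
proof -
  have y: "y1 \<in> S" "y2 \<in> S" using assms(4,5) by (auto simp: LS_def)
  have vS: "y1 - y2 \<in> S" using csubspace_diff[OF assms(1) y] .
  have "wip d (y1 - x) (y1 - y2) = 0" "wip d (y2 - x) (y1 - y2) = 0"
    using assms(4,5) vS by (auto simp: LS_def)
  then have "wip d ((y1 - x) - (y2 - x)) (y1 - y2) = 0" by (simp add: wip_diff_left)
  then have "wip d (y1 - y2) (y1 - y2) = 0" by simp
  then have "\<forall>i. d i \<noteq> 0 \<longrightarrow> (y1 - y2)$i = 0" using wip_self_zero[OF assms(2)] by blast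
  then have "y1 - y2 = 0" using assms(3) vS unfolding adm_def by blast
  then show ?thesis by simp
qed

lemma wip_ind_cinner: "wip (ind J) v s = cinner (\<chi> i. if i \<in> J then v$i else 0) s"
  unfolding wip_def cinner_def ind_def by (intro sum.cong refl) auto

lemma basic_interp:
  fixes x z :: "complex^'n"
  assumes "basic S J" "LS S (ind J) x z" "i \<in> J"
  shows "z$i = x$i"
proof -
  let ?w = "(\<chi> i. if i \<in> J then (z - x)$i else 0) :: complex^'n"
  have "\<forall>s\<in>S. cinner ?w s = 0" using assms(2) unfolding LS_def wip_ind_cinner by blast
  moreover have "\<forall>i. i \<notin> J \<longrightarrow> ?w$i = 0" by simp
  ultimately have "?w = 0" using assms(1) unfolding basic_def by blast
  then have "?w$i = 0" by simp
  then show ?thesis using assms(3) by simp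
qed

lemma basic_LS_intro:
  assumes "z \<in> S" "\<forall>i\<in>J. z$i = x$i"
  shows "LS S (ind J) x z"
  using assms unfolding LS_def wip_def ind_def by (auto intro!: sum.neutral)

lemma basic_adm: "basic S J \<Longrightarrow> adm S (ind J)"
  unfolding basic_def adm_def ind_def by auto


lemma main_ind:
  fixes S :: "(complex^'n) set" and x :: "complex^'n"
  assumes "csubspace S" "\<forall>i. d i \<ge> 0" "adm S d"
  shows "\<exists>y. LS S d x y \<and> y \<in> convex hull (Bset S x)"
  using assms
proof (induction "card (active S) + card {i. d i \<noteq> 0}" arbitrary: S d x rule: less_induct)
  case less
  note S = less.prems(1) and dnn = less.prems(2) and ad = less.prems(3)
  show ?case
  proof (cases "\<exists>j. d j \<noteq> 0")
    case False
    hence d0: "\<And>i. d i = 0" by auto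
    have S0: "\<And>y. y \<in> S \<Longrightarrow> y = 0" using ad d0 unfolding adm_def by auto
    have z: "0 \<in> S" using S by (rule csubspace_zero)
    have "LS S d x 0" using z d0 by (simp add: LS_def wip_def)
    moreover have "basic S {}" using S0 by (auto simp: basic_def vec_eq_iff)
    moreover have "LS S (ind {}) x 0" using z by (simp add: LS_def wip_def ind_def)
    ultimately have "LS S d x 0 \<and> 0 \<in> Bset S x" unfolding Bset_def by blast
    then show ?thesis by (meson hull_subset subsetD)
  next
    case True
    then obtain j where dj: "d j \<noteq> 0" by auto
    define t where "t = d j"
    have tpos: "t > 0" using dj dnn t_def by (metis less_eq_real_def)
    define d0 where "d0 = d(j := 0)"
    have d0nn: "\<forall>i. d0 i \<ge> 0" using dnn by (simp add: d0_def)
    have cardd0: "card {i. d0 i \<noteq> 0} < card {i. d i \<noteq> 0}"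
    proof -
      have "{i. d0 i \<noteq> 0} \<subset> {i. d i \<noteq> 0}" using dj by (auto simp: d0_def)
      thus ?thesis by (simp add: psubset_card_mono)
    qed
    have wsplit: "\<And>v s. wip d v s = wip d0 v s + of_real t * v$j * cnj (s$j)"
      unfolding d0_def t_def by (rule wip_split)
    show ?thesis
    proof (cases "\<forall>y\<in>S. y$j = 0")
      case True
      have ad0: "adm S d0" using ad True unfolding adm_def d0_def by (metis fun_upd_apply)
      obtain y0 where y0: "LS S d0 x y0" "y0 \<in> convex hull (Bset S x)"
        using less.hyps[of S d0] cardd0 S d0nn ad0 by auto
      have "LS S d x y0" using y0(1) True wsplit unfolding LS_def by auto
      thus ?thesis using y0(2) by blast
    next
      case False
      then obtain s1 where s1: "s1 \<in> S" "s1$j \<noteq> 0" by auto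
      obtain s0 where s0: "s0 \<in> S" "s0$j = 1" "\<not> adm S d0 \<Longrightarrow> (\<forall>i. d0 i \<noteq> 0 \<longrightarrow> s0$i = 0)"
      proof (cases "adm S d0")
        case True
        show ?thesis using that[of "(1 / s1$j) *s s1"] s1 S True by (simp add: csubspace_def)
      next
        case False
        then obtain s2 where s2: "s2 \<in> S" "\<forall>i. d0 i \<noteq> 0 \<longrightarrow> s2$i = 0" "s2 \<noteq> 0"
          unfolding adm_def by auto
        have s2j: "s2$j \<noteq> 0"
        proof
          assume "s2$j = 0"
          hence "\<forall>i. d i \<noteq> 0 \<longrightarrow> s2$i = 0" using s2(2) unfolding d0_def by (metis fun_upd_other)
          thus False using ad s2 unfolding adm_def by auto
        qed
        show ?thesis using that[of "(1 / s2$j) *s s2"] s2 S s2j by (simp add: csubspace_def)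
      qed
      define S' where "S' = {y \<in> S. y$j = 0}"
      have S': "csubspace S'" using S unfolding S'_def csubspace_def by auto
      have S'S: "S' \<subseteq> S" by (auto simp: S'_def)
      have decomp: "\<And>s. s \<in> S \<Longrightarrow> s - s$j *s s0 \<in> S'"
        unfolding S'_def using s0 S by (simp add: csubspace_diff csubspace_scale)
      have act: "card (active S') < card (active S)"
      proof -
        have "active S' \<subset> active S"
          using S'S s0 unfolding active_def S'_def by force
        thus ?thesis by (simp add: psubset_card_mono)
      qed
      have ad': "adm S' d0"
        unfolding adm_def
      proof (intro ballI impI)
        fix y assume yS': "y \<in> S'" and h: "\<forall>i. d0 i \<noteq> 0 \<longrightarrow> y$i = 0"
        have "y$j = 0" using yS' by (simp add: S'_def)
        hence "\<forall>i. d i \<noteq> 0 \<longrightarrow> y$i = 0" using h unfolding d0_def by (metis fun_upd_other)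
        thus "y = 0" using ad yS' S'S unfolding adm_def by auto
      qed
      define x' where "x' = x - (x$j) *s s0"
      obtain y' where y': "LS S' d0 x' y'" "y' \<in> convex hull (Bset S' x')"
        using less.hyps[of S' d0 x'] act cardd0 S' d0nn ad' by auto
      define yinf where "yinf = (x$j) *s s0 + y'"
      have y'S': "y' \<in> S'" using y'(1) by (simp add: LS_def)
      have yinfS: "yinf \<in> S" unfolding yinf_def using y'S' S'S s0 S
        by (auto intro: csubspace_add csubspace_scale)
      have yinfj: "yinf$j = x$j" using y'S' s0 by (simp add: yinf_def S'_def)
      have yinf_x: "yinf - x = y' - x'" by (simp add: yinf_def x'_def algebra_simps)
      have yinf_orth: "\<And>s. s \<in> S' \<Longrightarrow> wip d0 (yinf - x) s = 0"
        using y'(1) yinf_x by (simp add: LS_def)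
      have Bsub: "(\<lambda>z. (x$j) *s s0 + z) ` Bset S' x' \<subseteq> Bset S x"
      proof
        fix z assume "z \<in> (\<lambda>z. (x$j) *s s0 + z) ` Bset S' x'"
        then obtain z' J' where z: "z = (x$j) *s s0 + z'" "basic S' J'" "LS S' (ind J') x' z'"
          unfolding Bset_def by auto
        have z'S': "z' \<in> S'" using z(3) by (simp add: LS_def)
        have interp: "\<And>i. i \<in> J' \<Longrightarrow> z'$i = x'$i" using basic_interp[OF z(2,3)] .
        have bas: "basic S (insert j J')"
          unfolding basic_def
        proof (intro conjI allI impI ballI)
          fix y assume yS: "y \<in> S" and h: "\<forall>i\<in>insert j J'. y$i = 0"
          have "y \<in> S'" using yS h by (simp add: S'_def)
          thus "y = 0" using z(2) h unfolding basic_def by auto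
        next
          fix w :: "complex^'n"
          assume h: "(\<forall>i. i \<notin> insert j J' \<longrightarrow> w$i = 0) \<and> (\<forall>s\<in>S. cinner w s = 0)"
          define w' where "w' = w - (w$j) *s axis j 1"
          have w'supp: "\<forall>i. i \<notin> J' \<longrightarrow> w'$i = 0"
            using h by (auto simp: w'_def axis_def)
          have w'orth: "\<forall>s\<in>S'. cinner w' s = 0"
          proof
            fix s assume sS': "s \<in> S'"
            have "cinner w' s = cinner w s - w$j * cinner (axis j 1) s"
              by (simp add: w'_def cinner_diff_left cinner_scale_left)
            also have "\<dots> = 0" using h sS' S'S by (auto simp: cinner_axis_left S'_def)
            finally show "cinner w' s = 0" .
          qed
          have "w' = 0" using z(2) w'supp w'orth unfolding basic_def by blast
          hence weq: "w = (w$j) *s axis j 1" by (simp add: w'_def)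
          have "cinner w s0 = 0" using h s0 by auto
          hence "w$j * cinner (axis j 1) s0 = 0" using weq by (metis cinner_scale_left)
          hence "w$j = 0" using s0 by (simp add: cinner_axis_left)
          thus "w = 0" using weq by simp
        qed
        have "LS S (ind (insert j J')) x z"
        proof (rule basic_LS_intro)
          show "z \<in> S" unfolding z(1) using z'S' S'S s0 S
            by (auto intro: csubspace_add csubspace_scale)
          show "\<forall>i\<in>insert j J'. z$i = x$i"
            using z'S' s0 interp by (auto simp: z(1) S'_def x'_def)
        qed
        thus "z \<in> Bset S x" using bas unfolding Bset_def by blast
      qed
      have yinf_hull: "yinf \<in> convex hull (Bset S x)"
      proof -
        have "yinf \<in> (\<lambda>z. (x$j) *s s0 + z) ` (convex hull (Bset S' x'))" using y'(2) yinf_def by auto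
        also have "\<dots> = convex hull ((\<lambda>z. (x$j) *s s0 + z) ` Bset S' x')"
          by (rule convex_hull_translation[symmetric])
        also have "\<dots> \<subseteq> convex hull (Bset S x)" by (rule hull_mono[OF Bsub])
        finally show ?thesis .
      qed
      have wdec: "\<And>v s. s \<in> S \<Longrightarrow> (\<forall>s'\<in>S'. wip d0 v s' = 0) \<Longrightarrow> wip d0 v s = cnj (s$j) * wip d0 v s0"
      proof -
        fix v s assume sS: "s \<in> S" and h: "\<forall>s'\<in>S'. wip d0 v s' = 0"
        have "s = s$j *s s0 + (s - s$j *s s0)" by simp
        hence "wip d0 v s = wip d0 v (s$j *s s0) + wip d0 v (s - s$j *s s0)"
          by (metis wip_add_right)
        also have "\<dots> = cnj (s$j) * wip d0 v s0" using h decomp[OF sS] by (simp add: wip_scale_right)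
        finally show "wip d0 v s = cnj (s$j) * wip d0 v s0" .
      qed
      show ?thesis
      proof (cases "adm S d0")
        case False
        have w0: "\<And>v. wip d0 v s0 = 0"
          unfolding wip_def using s0(3)[OF False] by (auto intro!: sum.neutral)
        have "LS S d x yinf"
          unfolding LS_def
        proof (intro conjI ballI)
          show "yinf \<in> S" by (rule yinfS)
          fix s assume sS: "s \<in> S"
          have "wip d (yinf - x) s = wip d0 (yinf - x) s" using wsplit yinfj by simp
          also have "\<dots> = 0" using wdec[OF sS] yinf_orth w0 by simp
          finally show "wip d (yinf - x) s = 0" .
        qed
        thus ?thesis using yinf_hull by blast
      next
        case True
        obtain y0 where y0: "LS S d0 x y0" "y0 \<in> convex hull (Bset S x)"
          using less.hyps[of S d0 x] cardd0 S d0nn True by auto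
        have y0S: "y0 \<in> S" using y0(1) by (simp add: LS_def)
        define \<tau> where "\<tau> = (y0 - x)$j"
        show ?thesis
        proof (cases "\<tau> = 0")
          case True
          have "LS S d x y0" using y0(1) True wsplit unfolding LS_def \<tau>_def by auto
          thus ?thesis using y0(2) by blast
        next
          case False
          define u where "u = yinf - y0"
          have uS: "u \<in> S" unfolding u_def using yinfS y0S S by (simp add: csubspace_diff)
          have uj: "u$j = - \<tau>" using yinfj by (simp add: u_def \<tau>_def)
          define a where "a = wip d0 u s0"
          define q where "q = (\<Sum>i\<in>UNIV. d0 i * (cmod (u$i))^2)"
          have qnn: "q \<ge> 0" unfolding q_def using d0nn by (simp add: sum_nonneg)
          have wuu: "wip d0 u u = of_real q" unfolding q_def by (rule wip_self)
          have uorth: "\<forall>s'\<in>S'. wip d0 u s' = 0"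
          proof
            fix s' assume s'S': "s' \<in> S'"
            have "u = (yinf - x) - (y0 - x)" by (simp add: u_def)
            hence "wip d0 u s' = wip d0 (yinf - x) s' - wip d0 (y0 - x) s'"
              by (metis wip_diff_left)
            also have "\<dots> = 0" using yinf_orth[OF s'S'] y0(1) s'S' S'S by (auto simp: LS_def)
            finally show "wip d0 u s' = 0" .
          qed
          have uwdec: "\<And>s. s \<in> S \<Longrightarrow> wip d0 u s = cnj (s$j) * a"
            using wdec uorth unfolding a_def by blast
          have qa: "of_real q = - cnj \<tau> * a" using uwdec[OF uS] wuu uj by simp
          define N where "N = (cmod \<tau>)^2"
          have Npos: "N > 0" using False by (simp add: N_def)
          have tN: "\<tau> * cnj \<tau> = of_real N" unfolding N_def by (rule complex_norm_square[symmetric])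
          define lam where "lam = t * N / (q + t * N)"
          have den: "q + t * N > 0" using qnn tpos Npos by (simp add: add_nonneg_pos)
          have lam0: "0 \<le> lam" unfolding lam_def using den tpos Npos by simp
          have lam1: "lam \<le> 1" unfolding lam_def using den qnn by simp
          have lameq: "lam * (q + t * N) = t * N" unfolding lam_def using den by simp
          have key: "of_real lam * a + of_real t * \<tau> * (1 - of_real lam) = 0"
          proof -
            have cz: "cnj \<tau> \<noteq> 0" using False by simp
            have "cnj \<tau> * (of_real lam * a + of_real t * \<tau> * (1 - of_real lam))
                = of_real lam * (cnj \<tau> * a) + of_real t * (\<tau> * cnj \<tau>) * (1 - of_real lam)"
              by (simp add: algebra_simps)
            also have "\<dots> = of_real (- lam * q + t * N * (1 - lam))"
              using qa tN by simp
            also have "- lam * q + t * N * (1 - lam) = 0" using lameq by (simp add: algebra_simps)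
            finally show ?thesis using cz by simp
          qed
          define y where "y = y0 + lam *\<^sub>R u"
          have yS: "y \<in> S" unfolding y_def using y0S uS S by (simp add: csubspace_add csubspace_scaleR)
          have "LS S d x y"
            unfolding LS_def
          proof (intro conjI ballI)
            show "y \<in> S" by (rule yS)
            fix s assume sS: "s \<in> S"
            have yx: "y - x = (y0 - x) + lam *\<^sub>R u" by (simp add: y_def algebra_simps)
            have "wip d0 (y - x) s = wip d0 (y0 - x) s + of_real lam * wip d0 u s"
              unfolding yx by (simp add: wip_add_left wip_scaleR_left)
            also have "\<dots> = of_real lam * (cnj (s$j) * a)" using y0(1) sS uwdec[OF sS] by (simp add: LS_def)
            finally have e1: "wip d0 (y - x) s = of_real lam * (cnj (s$j) * a)" .
            have e2: "(y - x)$j = \<tau> * (1 - of_real lam)"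
            proof -
              have "(y - x)$j = (y0 - x)$j + of_real lam * u$j" by (simp add: y_def scaleR_cvec)
              thus ?thesis using uj by (simp add: \<tau>_def algebra_simps)
            qed
            have "wip d (y - x) s = wip d0 (y - x) s + of_real t * (y - x)$j * cnj (s$j)"
              by (rule wsplit)
            also have "\<dots> = of_real lam * (cnj (s$j) * a) + of_real t * (\<tau> * (1 - of_real lam)) * cnj (s$j)"
              by (simp only: e1 e2)
            also have "\<dots> = cnj (s$j) * (of_real lam * a + of_real t * \<tau> * (1 - of_real lam))"
              by (simp add: algebra_simps)
            also have "\<dots> = 0" using key by simp
            finally show "wip d (y - x) s = 0" .
          qed
          moreover have "y \<in> convex hull (Bset S x)"
          proof -
            have "y = (1 - lam) *\<^sub>R y0 + lam *\<^sub>R yinf" by (simp add: y_def u_def algebra_simps)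
            thus ?thesis using convexD[OF convex_convex_hull y0(2) yinf_hull, of "1 - lam" lam] lam0 lam1
              by simp
          qed
          ultimately show ?thesis by blast
        qed
      qed
    qed
  qed
qed



lemma mat_eqI: "(\<And>x. A *v x = B *v x) \<Longrightarrow> A = B"
  using matrix_eq by blast

lemma cvec_eq_cinner: "(\<And>x. cinner x u = cinner x v) \<Longrightarrow> u = v"
  by (metis cinner_axis_left complex_cnj_cancel_iff vec_eq_iff)

lemma cvec_eq_cinner': "(\<And>x. cinner u x = cinner v x) \<Longrightarrow> u = v"
  by (metis cinner_axis_right vec_eq_iff)

lemma csubspace_subspace: "csubspace S \<Longrightarrow> subspace S"
  unfolding subspace_def using csubspace_zero csubspace_add csubspace_scaleR by blast

lemma orth_exists:
  assumes "csubspace S"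
  shows "\<exists>y. y \<in> S \<and> (\<forall>s\<in>S. cinner (x - y) s = 0)"
proof -
  have sp: "span S = S" using csubspace_subspace[OF assms] by (simp add: span_eq_iff)
  obtain y z where yz: "y \<in> span S" "\<And>w. w \<in> span S \<Longrightarrow> orthogonal z w" "x = y + z"
    using orthogonal_subspace_decomp_exists[of S x] by blast
  have "\<forall>s\<in>S. cinner z s = 0"
  proof
    fix s assume sS: "s \<in> S"
    have "Re (cinner z s) = 0" using yz(2)[of s] sS sp by (simp add: Re_cinner orthogonal_def)
    moreover have "\<i> *s s \<in> S" using assms sS by (rule csubspace_scale)
    hence "Re (cinner z (\<i> *s s)) = 0" using yz(2)[of "\<i> *s s"] sp by (simp add: Re_cinner orthogonal_def)
    hence "Im (cinner z s) = 0" by (simp add: cinner_scale_right)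
    ultimately show "cinner z s = 0" by (simp add: complex_eq_iff)
  qed
  moreover have "x - y = z" using yz(3) by simp
  ultimately show ?thesis using yz(1) sp by auto
qed

lemma orth_unique:
  assumes "csubspace S" "y1 \<in> S" "\<forall>s\<in>S. cinner (x - y1) s = 0" "y2 \<in> S" "\<forall>s\<in>S. cinner (x - y2) s = 0"
  shows "y1 = y2"
proof -
  have d: "y1 - y2 \<in> S" using assms by (simp add: csubspace_diff)
  have "cinner (y1 - y2) (y1 - y2) = cinner (x - y2) (y1 - y2) - cinner (x - y1) (y1 - y2)"
    by (simp add: cinner_diff_left)
  also have "\<dots> = 0" using assms d by simp
  finally show ?thesis by (simp add: cinner_self_eq_0)
qed

definition pr :: "(complex^'n) set \<Rightarrow> complex^'n \<Rightarrow> complex^'n" where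
  "pr S x = (THE y. y \<in> S \<and> (\<forall>s\<in>S. cinner (x - y) s = 0))"

lemma pr_eq:
  assumes "csubspace S" "y \<in> S" "\<forall>s\<in>S. cinner (x - y) s = 0"
  shows "pr S x = y"
  unfolding pr_def
  by (rule the_equality) (use assms orth_unique in blast)+

lemma pr_props:
  assumes "csubspace S"
  shows "pr S x \<in> S" "\<forall>s\<in>S. cinner (x - pr S x) s = 0"
proof -
  obtain y where y: "y \<in> S" "\<forall>s\<in>S. cinner (x - y) s = 0" using orth_exists[OF assms] by blast
  have "pr S x = y" using pr_eq[OF assms y] .
  thus "pr S x \<in> S" "\<forall>s\<in>S. cinner (x - pr S x) s = 0" using y by auto
qed

lemma pr_add: "csubspace S \<Longrightarrow> pr S (x + x') = pr S x + pr S x'"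
  apply (rule pr_eq)
  using pr_props[of S x] pr_props[of S x']
  by (auto simp: csubspace_add cinner_diff_left cinner_add_left algebra_simps)

lemma pr_scale: "csubspace S \<Longrightarrow> pr S (c *s x) = c *s pr S x"
proof (rule pr_eq)
  assume S: "csubspace S"
  show "c *s pr S x \<in> S" using pr_props(1)[OF S] S by (simp add: csubspace_scale)
  show "\<forall>s\<in>S. cinner (c *s x - c *s pr S x) s = 0"
    using pr_props(2)[OF S, of x] by (simp add: cinner_diff_left cinner_scale_left)
qed

lemma pr_linear: "csubspace S \<Longrightarrow> Vector_Spaces.linear (*s) (*s) (pr S)"
  by unfold_locales (simp_all add: pr_add pr_scale)

lemma pr_S: "csubspace S \<Longrightarrow> s \<in> S \<Longrightarrow> pr S s = s"
  by (rule pr_eq) auto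

lemma pr_sym: "csubspace S \<Longrightarrow> cinner (pr S x) y = cinner x (pr S y)"
proof -
  assume S: "csubspace S"
  have 1: "cinner (pr S x) (y - pr S y) = 0"
    using pr_props[OF S, of y] pr_props(1)[OF S, of x] by (metis cinner_cnj complex_cnj_zero)
  have 2: "cinner (x - pr S x) (pr S y) = 0"
    using pr_props[OF S, of x] pr_props(1)[OF S, of y] by blast
  have "cinner (pr S x) y = cinner (pr S x) (pr S y)" using 1 by (simp add: cinner_diff_right)
  also have "\<dots> = cinner x (pr S y)" using 2 by (simp add: cinner_diff_left)
  finally show ?thesis .
qed

lemma orth_proj_onto_eq:
  assumes S: "csubspace S"
  shows "orth_proj_onto S = matrix (pr S)"
proof -
  let ?E = "matrix (pr S)"
  have Ev: "\<And>x. ?E *v x = pr S x" using matrix_works[OF pr_linear[OF S]] .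
  have P1: "is_orth_proj ?E \<and> mat_range ?E = S"
  proof (intro conjI)
    show "mat_range ?E = S"
      unfolding mat_range_def Ev using pr_props(1)[OF S] pr_S[OF S] by (auto simp: image_def) (metis)
    show "is_orth_proj ?E"
      unfolding is_orth_proj_def hermitian_def
    proof
      show "?E ** ?E = ?E"
        by (rule mat_eqI) (simp add: matrix_vector_mul_assoc[symmetric] Ev pr_S[OF S] pr_props(1)[OF S])
      show "adjoint_mat ?E = ?E"
      proof (rule mat_eqI)
        fix y show "adjoint_mat ?E *v y = ?E *v y"
          by (rule cvec_eq_cinner) (simp add: cinner_adjoint[symmetric] Ev pr_sym[OF S])
      qed
    qed
  qed
  have uniq: "P = ?E" if P: "is_orth_proj P \<and> mat_range P = S" for P
  proof (rule mat_eqI)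
    fix x
    have PP: "P ** P = P" and PH: "adjoint_mat P = P" using P by (auto simp: is_orth_proj_def hermitian_def)
    have "pr S x = P *v x"
    proof (rule pr_eq[OF S])
      show "P *v x \<in> S" using P by (auto simp: mat_range_def)
      show "\<forall>s\<in>S. cinner (x - P *v x) s = 0"
      proof
        fix s assume "s \<in> S"
        then obtain w where w: "s = P *v w" using P by (auto simp: mat_range_def)
        have "cinner (x - P *v x) s = cinner (P *v (x - P *v x)) w"
          unfolding w by (metis PH cinner_adjoint)
        also have "P *v (x - P *v x) = 0"
          by (simp add: matrix_vector_mult_diff_distrib matrix_vector_mul_assoc PP)
        finally show "cinner (x - P *v x) s = 0" by simp
      qed
    qed
    thus "P *v x = ?E *v x" by (simp add: Ev)
  qed
  show ?thesis unfolding orth_proj_onto_def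
  proof (rule the_equality[where P="\<lambda>P. is_orth_proj P \<and> mat_range P = S"])
    show "is_orth_proj ?E \<and> mat_range ?E = S" by (rule P1)
  next
    fix P assume "is_orth_proj P \<and> mat_range P = S"
    thus "P = ?E" by (rule uniq)
  qed
qed



lemma mp_unique:
  fixes A X Y :: "complex^'n^'n"
  assumes X1: "A ** X ** A = A" and X2: "X ** A ** X = X" and X3: "hermitian (A ** X)" and X4: "hermitian (X ** A)"
    and Y1: "A ** Y ** A = A" and Y2: "Y ** A ** Y = Y" and Y3: "hermitian (A ** Y)" and Y4: "hermitian (Y ** A)"
  shows "X = Y"
proof -
  have aXA: "adjoint_mat X ** adjoint_mat A = A ** X" using X3 by (simp add: hermitian_def adjoint_mult)
  have aAX: "adjoint_mat A ** adjoint_mat X = X ** A" using X4 by (simp add: hermitian_def adjoint_mult)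
  have aYA: "adjoint_mat Y ** adjoint_mat A = A ** Y" using Y3 by (simp add: hermitian_def adjoint_mult)
  have aAY: "adjoint_mat A ** adjoint_mat Y = Y ** A" using Y4 by (simp add: hermitian_def adjoint_mult)
  have aA1: "adjoint_mat A ** adjoint_mat Y ** adjoint_mat A = adjoint_mat A"
    using arg_cong[OF Y1, of adjoint_mat] by (simp add: adjoint_mult matrix_mul_assoc)
  have aA2: "adjoint_mat A ** adjoint_mat X ** adjoint_mat A = adjoint_mat A"
    using arg_cong[OF X1, of adjoint_mat] by (simp add: adjoint_mult matrix_mul_assoc)
  have "X = X ** (A ** X)" using X2 by (simp add: matrix_mul_assoc)
  also have "\<dots> = X ** (adjoint_mat X ** adjoint_mat A)" by (simp only: aXA)
  also have "\<dots> = X ** (adjoint_mat X ** (adjoint_mat A ** adjoint_mat Y ** adjoint_mat A))"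
    by (simp only: aA1)
  also have "\<dots> = X ** ((adjoint_mat X ** adjoint_mat A) ** (adjoint_mat Y ** adjoint_mat A))"
    by (simp add: matrix_mul_assoc)
  also have "\<dots> = X ** ((A ** X) ** (A ** Y))" by (simp only: aXA aYA)
  also have "\<dots> = (X ** A ** X) ** A ** Y" by (simp add: matrix_mul_assoc)
  also have "\<dots> = X ** A ** Y" by (simp only: X2)
  finally have Xe: "X = X ** A ** Y" .
  have "Y = (Y ** A) ** Y" using Y2 by (simp add: matrix_mul_assoc)
  also have "\<dots> = (adjoint_mat A ** adjoint_mat Y) ** Y" by (simp only: aAY)
  also have "\<dots> = ((adjoint_mat A ** adjoint_mat X ** adjoint_mat A) ** adjoint_mat Y) ** Y"
    by (simp only: aA2)
  also have "\<dots> = ((adjoint_mat A ** adjoint_mat X) ** (adjoint_mat A ** adjoint_mat Y)) ** Y"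
    by (simp add: matrix_mul_assoc)
  also have "\<dots> = ((X ** A) ** (Y ** A)) ** Y" by (simp only: aAX aAY)
  also have "\<dots> = X ** A ** (Y ** A ** Y)" by (simp add: matrix_mul_assoc)
  also have "\<dots> = X ** A ** Y" by (simp only: Y2)
  finally show ?thesis using Xe by simp
qed

lemma mp_eq:
  fixes A X :: "complex^'n^'n"
  assumes "A ** X ** A = A" "X ** A ** X = X" "hermitian (A ** X)" "hermitian (X ** A)"
  shows "moore_penrose A = X"
  unfolding moore_penrose_def
  apply (rule the_equality)
  using assms mp_unique[of A _ X] by blast+

definition wdiag :: "('n \<Rightarrow> real) \<Rightarrow> complex^'n^'n" where
  "wdiag d = (\<chi> i j. if i = j then of_real (d i) else 0)"

lemma wdiag_mult: "wdiag d *v v = (\<chi> i. of_real (d i) * v$i)"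
proof -
  have "\<And>i. (\<Sum>j\<in>UNIV. (if i = j then of_real (d i) else 0) * v$j) = (\<Sum>j\<in>UNIV. if i = j then of_real (d i) * v$j else 0)"
    by (rule sum.cong) auto
  thus ?thesis by (simp add: wdiag_def matrix_vector_mult_def vec_eq_iff)
qed

lemma cinner_wdiag: "cinner (wdiag d *v v) s = wip d v s"
  by (simp add: wdiag_mult cinner_def wip_def)

lemma E_v: "csubspace S \<Longrightarrow> orth_proj_onto S *v v = pr S v"
  using orth_proj_onto_eq matrix_works pr_linear by metis

lemma E_herm: "csubspace S \<Longrightarrow> hermitian (orth_proj_onto S)"
  unfolding hermitian_def
  by (rule mat_eqI, rule cvec_eq_cinner) (simp add: cinner_adjoint[symmetric] E_v pr_sym)

lemma oblique_LS:
  fixes S :: "(complex^'n) set"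
  assumes S: "csubspace S" and dnn: "\<forall>i. d i \<ge> 0" and ad: "adm S d" and y: "LS S d x y"
  shows "oblique_proj (wdiag d) S *v x = y"
proof -
  define E where "E = orth_proj_onto S"
  have Ev: "\<And>v. E *v v = pr S v" unfolding E_def using E_v[OF S] .
  have ES: "\<And>v. E *v v \<in> S" by (simp add: Ev pr_props(1)[OF S])
  have EE: "\<And>v. E *v (E *v v) = E *v v" by (simp add: Ev pr_S[OF S] pr_props(1)[OF S])
  have Esym: "\<And>u v. cinner (E *v u) v = cinner u (E *v v)" by (simp add: Ev pr_sym[OF S])
  define D where "D = wdiag d"
  define A where "A = E ** D ** E"
  define M where "M = A + (mat 1 - E)"
  have Av: "\<And>v. A *v v = E *v (D *v (E *v v))" by (simp add: A_def matrix_vector_mul_assoc matrix_mul_assoc)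
  have Mv: "\<And>v. M *v v = A *v v + v - E *v v"
    by (simp add: M_def matrix_vector_mult_add_rdistrib matrix_vector_mult_diff_rdistrib)
  have AE: "\<And>v. A *v (E *v v) = A *v v" by (simp add: Av EE)
  have EA: "\<And>v. E *v (A *v v) = A *v v" by (simp add: Av EE)
  have EM: "\<And>v. E *v (M *v v) = A *v v"
    by (simp add: Mv EA EE matrix_vector_right_distrib matrix_vector_mult_diff_distrib)
  have ME: "\<And>v. M *v (E *v v) = A *v v" by (simp add: Mv AE EE)
  have Minj: "\<forall>v. M *v v = 0 \<longrightarrow> v = 0"
  proof (intro allI impI)
    fix v assume h: "M *v v = 0"
    have Av0: "A *v v = 0" using EM[of v] h by simp
    have vE: "E *v v = v" using h Av0 Mv[of v] by simp
    have EDv: "E *v (D *v v) = 0" using Av0 Av[of v] vE by simp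
    have "wip d v v = cinner (D *v v) v" by (simp add: D_def cinner_wdiag)
    also have "\<dots> = cinner (D *v v) (E *v v)" using vE by simp
    also have "\<dots> = cinner (E *v (D *v v)) v" by (simp add: Esym)
    also have "\<dots> = 0" using EDv by simp
    finally have "wip d v v = 0" .
    hence "\<forall>i. d i \<noteq> 0 \<longrightarrow> v$i = 0" using wip_self_zero[OF dnn] by blast
    moreover have "v \<in> S" using ES[of v] vE by simp
    ultimately show "v = 0" using ad unfolding adm_def by blast
  qed
  obtain Minv where Minv: "Minv ** M = mat 1"
    using Minj matrix_left_invertible_ker by blast
  have Minv': "M ** Minv = mat 1" using Minv matrix_left_right_inverse by blast
  have Minv1: "\<And>v. Minv *v (M *v v) = v" by (simp add: matrix_vector_mul_assoc Minv)
  have Minv2: "\<And>v. M *v (Minv *v v) = v" by (simp add: matrix_vector_mul_assoc Minv')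
  have comm: "\<And>v. E *v (Minv *v v) = Minv *v (E *v v)"
  proof -
    fix v
    have "M *v (E *v (Minv *v v)) = A *v (Minv *v v)" by (rule ME)
    also have "\<dots> = E *v (M *v (Minv *v v))" by (rule EM[symmetric])
    also have "\<dots> = E *v v" by (simp only: Minv2)
    finally have "M *v (E *v (Minv *v v)) = E *v v" .
    hence "Minv *v (M *v (E *v (Minv *v v))) = Minv *v (E *v v)" by simp
    thus "E *v (Minv *v v) = Minv *v (E *v v)" by (simp add: Minv1)
  qed
  have K1: "\<And>v. Minv *v (A *v v) = E *v v"
  proof -
    fix v
    have "A *v v = M *v (E *v v)" by (rule ME[symmetric])
    thus "Minv *v (A *v v) = E *v v" by (simp only: Minv1)
  qed
  have K2: "\<And>v. A *v (Minv *v (E *v v)) = E *v v"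
  proof -
    fix v
    define w where "w = Minv *v (E *v v)"
    have Ew: "E *v w = w" unfolding w_def by (simp only: comm EE)
    have "M *v w = E *v v" by (simp add: w_def Minv2)
    thus "A *v w = E *v v" using Mv[of w] Ew by simp
  qed
  define X where "X = E ** Minv ** E"
  have Xv: "\<And>v. X *v v = E *v (Minv *v (E *v v))" by (simp add: X_def matrix_vector_mul_assoc matrix_mul_assoc)
  have AX: "A ** X = E" by (rule mat_eqI) (simp add: matrix_vector_mul_assoc[symmetric] Xv AE K2)
  have XA: "X ** A = E" by (rule mat_eqI) (simp add: matrix_vector_mul_assoc[symmetric] Xv EA K1 EE)
  have P1: "A ** X ** A = A" unfolding AX by (rule mat_eqI) (simp add: matrix_vector_mul_assoc[symmetric] EA)
  have P2: "X ** A ** X = X" unfolding XA by (rule mat_eqI) (simp add: matrix_vector_mul_assoc[symmetric] Xv EE)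
  have herm: "hermitian E" unfolding E_def by (rule E_herm[OF S])
  have MP: "moore_penrose A = X" by (rule mp_eq) (use P1 P2 AX XA herm in auto)
  have OP: "oblique_proj D S = E + X ** (E ** D ** (mat 1 - E))"
    by (simp add: oblique_proj_def Let_def E_def A_def MP[unfolded A_def E_def])
  have XE: "\<And>v. X *v (E *v v) = X *v v" by (simp add: Xv EE)
  have "oblique_proj D S *v x = E *v x + X *v (E *v (D *v (x - E *v x)))"
    by (simp add: OP matrix_vector_mult_add_rdistrib matrix_vector_mul_assoc[symmetric]
        matrix_vector_mult_diff_rdistrib)
  also have "\<dots> = E *v x + X *v (E *v (D *v x)) - X *v (A *v x)"
    by (simp add: Av XE matrix_vector_mult_diff_distrib)
  also have "X *v (A *v x) = E *v x" by (simp add: matrix_vector_mul_assoc XA)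
  also have "E *v x + X *v (E *v (D *v x)) - E *v x = Minv *v (E *v (D *v x))"
    by (simp add: Xv EE comm)
  finally have OPx: "oblique_proj D S *v x = Minv *v (E *v (D *v x))" .
  have yS: "y \<in> S" and yorth: "\<forall>s\<in>S. wip d (y - x) s = 0" using y by (auto simp: LS_def)
  have EDyx: "E *v (D *v (y - x)) = 0"
  proof (rule cvec_eq_cinner')
    fix s
    have "cinner (E *v (D *v (y - x))) s = cinner (D *v (y - x)) (E *v s)" by (simp add: Esym)
    also have "\<dots> = wip d (y - x) (E *v s)" by (simp add: D_def cinner_wdiag)
    also have "\<dots> = 0" using yorth ES by blast
    finally show "cinner (E *v (D *v (y - x))) s = cinner 0 s" by simp
  qed
  have yE: "E *v y = y" using yS by (simp add: Ev pr_S[OF S])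
  have "M *v y = E *v (D *v x)"
  proof -
    have "M *v y = E *v (D *v y)" using Mv[of y] Av[of y] yE by simp
    also have "\<dots> = E *v (D *v x)" using EDyx by (simp add: matrix_vector_mult_diff_distrib)
    finally show ?thesis .
  qed
  hence "y = Minv *v (E *v (D *v x))" using Minv1[of y] by simp
  thus ?thesis using OPx by (simp add: D_def)
qed



lemma norm_sq_cvec: "(norm (x::complex^'n))^2 = (\<Sum>i\<in>UNIV. (cmod (x$i))^2)"
  unfolding norm_vec_def L2_set_def by (simp add: sum_nonneg)

lemma mv_axis: "((A::complex^'n^'m) *v axis i 1)$k = A$k$i"
proof -
  have "(A *v axis i 1)$k = (\<Sum>j\<in>UNIV. A$k$j * (axis i 1)$j)"
    unfolding matrix_vector_mult_def by simp
  also have "\<dots> = (\<Sum>j\<in>UNIV. if j = i then A$k$j else 0)"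
    by (rule sum.cong) (auto simp: axis_def)
  also have "\<dots> = A$k$i" by simp
  finally show ?thesis .
qed

lemma diag_pos_wdiag:
  fixes D :: "complex^'n^'n"
  assumes "D \<in> diag_pos"
  shows "\<exists>d. (\<forall>i. d i > 0) \<and> D = wdiag d"
proof -
  have dg: "is_diagonal D" and pd: "pos_def D" using assms by (auto simp: diag_pos_def)
  have herm: "adjoint_mat D = D" using pd by (simp add: pos_def_def hermitian_def)
  have real: "\<And>i. Im (D$i$i) = 0"
  proof -
    fix i
    have "cnj (D$i$i) = D$i$i" using herm by (metis adjoint_mat_def vec_lambda_beta)
    thus "Im (D$i$i) = 0" by (metis Reals_cnj_iff complex_is_Real_iff)
  qed
  have pos: "\<And>i. Re (D$i$i) > 0"
  proof -
    fix i :: 'n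
    have "axis i (1::complex) \<noteq> 0" by (simp add: axis_eq_0_iff)
    hence "0 < Re (cinner (D *v axis i 1) (axis i 1))" using pd by (simp add: pos_def_def)
    moreover have "cinner (D *v axis i 1) (axis i 1) = D$i$i"
      by (simp add: cinner_axis_right mv_axis)
    ultimately show "Re (D$i$i) > 0" by simp
  qed
  have "D = wdiag (\<lambda>i. Re (D$i$i))"
    unfolding wdiag_def vec_eq_iff
    using dg real by (auto simp: is_diagonal_def complex_eq_iff)
  thus ?thesis using pos by (intro exI[of _ "\<lambda>i. Re (D$i$i)"]) auto
qed

lemma wdiag_diag_pos:
  assumes "\<forall>i. d i > 0"
  shows "wdiag d \<in> diag_pos"
proof -
  have "is_diagonal (wdiag d)" by (simp add: is_diagonal_def wdiag_def)
  moreover have "hermitian (wdiag d)" by (simp add: hermitian_def adjoint_mat_def wdiag_def vec_eq_iff)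
  moreover have "0 < Re (cinner (wdiag d *v x) x)" if xnz: "x \<noteq> 0" for x
  proof -
    obtain i where xi: "x$i \<noteq> 0" using xnz by (metis vec_eq_iff zero_index)
    have "Re (cinner (wdiag d *v x) x) = (\<Sum>k\<in>UNIV. d k * (cmod (x$k))^2)"
      by (simp add: cinner_wdiag wip_self)
    also have "\<dots> > 0"
      using assms xi by (intro sum_pos2[where i=i]) (auto simp: less_imp_le)
    finally show ?thesis .
  qed
  ultimately show ?thesis by (auto simp: diag_pos_def pos_def_def)
qed

lemma diag_proj_wdiag:
  assumes "Q \<in> diag_proj"
  shows "Q = wdiag (ind {i. Q$i$i = 1})"
proof -
  have dg: "is_diagonal Q" and QQ: "Q ** Q = Q" using assms by (auto simp: diag_proj_def is_orth_proj_def)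
  have "\<And>i. Q$i$i = 0 \<or> Q$i$i = 1"
  proof -
    fix i
    have "(Q ** Q)$i$i = (\<Sum>k\<in>UNIV. Q$i$k * Q$k$i)" by (simp add: matrix_matrix_mult_def)
    also have "\<dots> = Q$i$i * Q$i$i"
      using dg by (subst sum.remove[of UNIV i]) (auto simp: is_diagonal_def intro!: sum.neutral)
    finally have "Q$i$i * Q$i$i = Q$i$i" using QQ by simp
    thus "Q$i$i = 0 \<or> Q$i$i = 1" by (metis mult_cancel_right1 mult_zero_left)
  qed
  thus ?thesis using dg unfolding wdiag_def ind_def vec_eq_iff is_diagonal_def by auto
qed

lemma wdiag_diag_proj: "wdiag (ind J) \<in> diag_proj"
proof -
  have "wdiag (ind J) ** wdiag (ind J) = wdiag (ind J)"
    by (rule mat_eqI) (simp add: matrix_vector_mul_assoc[symmetric] wdiag_mult ind_def vec_eq_iff)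
  moreover have "hermitian (wdiag (ind J))"
    by (simp add: hermitian_def adjoint_mat_def wdiag_def vec_eq_iff ind_def)
  moreover have "is_diagonal (wdiag (ind J))" by (simp add: is_diagonal_def wdiag_def)
  ultimately show ?thesis by (simp add: diag_proj_def is_orth_proj_def)
qed

lemma range_wdiag_ind: "mat_range (wdiag (ind J)) = {w. \<forall>i. i \<notin> J \<longrightarrow> w$i = 0}"
proof -
  have "\<And>w. (\<forall>i. i \<notin> J \<longrightarrow> w$i = 0) \<Longrightarrow> wdiag (ind J) *v w = w"
    by (simp add: wdiag_mult ind_def vec_eq_iff)
  moreover have "\<And>x i. i \<notin> J \<Longrightarrow> (wdiag (ind J) *v x)$i = 0"
    by (simp add: wdiag_mult ind_def)
  ultimately show ?thesis unfolding mat_range_def by (auto simp: image_def) metis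
qed

lemma corth_range_ind: "corth {w. \<forall>i. i \<notin> J \<longrightarrow> (w::complex^'n)$i = 0} = {y. \<forall>i\<in>J. y$i = 0}"
proof (intro set_eqI iffI)
  fix y :: "complex^'n"
  assume "y \<in> corth {w. \<forall>i. i \<notin> J \<longrightarrow> w$i = 0}"
  hence h: "\<forall>w. (\<forall>i. i \<notin> J \<longrightarrow> w$i = 0) \<longrightarrow> cinner y w = 0" by (simp add: corth_def)
  show "y \<in> {y. \<forall>i\<in>J. y$i = 0}"
  proof (simp, intro ballI)
    fix i assume "i \<in> J"
    then have "\<forall>k. k \<notin> J \<longrightarrow> (axis i 1 :: complex^'n)$k = 0" by (auto simp: axis_def)
    then have "cinner y (axis i 1) = 0" using h by blast
    thus "y$i = 0" by (simp add: cinner_axis_right)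
  qed
next
  fix y :: "complex^'n"
  assume "y \<in> {y. \<forall>i\<in>J. y$i = 0}"
  hence h: "\<forall>i\<in>J. y$i = 0" by simp
  have "cinner y w = 0" if "\<forall>i. i \<notin> J \<longrightarrow> w$i = 0" for w
    unfolding cinner_def using h that by (intro sum.neutral) auto
  thus "y \<in> corth {w. \<forall>i. i \<notin> J \<longrightarrow> w$i = 0}" by (simp add: corth_def)
qed

lemma compl_pos_basic:
  assumes S: "csubspace S"
  shows "compl_pos (mat_range (wdiag (ind J))) S \<longleftrightarrow> basic S J"
  unfolding compl_pos_def range_wdiag_ind corth_range_ind basic_def
  using csubspace_zero[OF S] by (auto simp: corth_def)



lemma approx_lemma:
  fixes S :: "(complex^'n) set" and x z y :: "complex^'n"
  assumes S: "csubspace S" and bJ: "basic S J" and z: "LS S (ind J) x z" and ep: "\<epsilon> > 0"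
    and y: "LS S (\<lambda>i. if i \<in> J then 1 else \<epsilon>) x y"
    and K0: "K \<ge> 0" and K: "\<forall>s\<in>S. norm s \<le> K * norm ((\<chi> i. if i \<in> J then s$i else 0) :: complex^'n)"
  shows "norm (y - z) \<le> K^2 * \<epsilon> * norm ((\<chi> i. if i \<in> J then 0 else (z - x)$i) :: complex^'n)"
proof -
  define de where "de = (\<lambda>i. if i \<in> J then 1 else \<epsilon>)"
  define v where "v = y - z"
  define w :: "complex^'n" where "w = (\<chi> i. if i \<in> J then 0 else (z - x)$i)"
  define Qv :: "complex^'n" where "Qv = (\<chi> i. if i \<in> J then v$i else 0)"
  have zS: "z \<in> S" and yS: "y \<in> S" using z y by (auto simp: LS_def)
  have vS: "v \<in> S" unfolding v_def using S yS zS by (rule csubspace_diff)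
  have zJ: "\<And>i. i \<in> J \<Longrightarrow> z$i = x$i" using basic_interp[OF bJ z] .
  have h0: "wip de (y - x) v = 0" using y vS by (auto simp: LS_def de_def)
  have "y - x = v + (z - x)" by (simp add: v_def)
  hence "wip de v v + wip de (z - x) v = 0" using h0 by (metis wip_add_left)
  hence h1: "wip de v v = - wip de (z - x) v" by (simp add: eq_neg_iff_add_eq_0)
  have h2: "wip de (z - x) v = of_real \<epsilon> * cinner w v"
    unfolding wip_def cinner_def de_def w_def sum_distrib_left
    by (rule sum.cong) (auto simp: zJ)
  have h3: "(norm Qv)^2 \<le> Re (wip de v v)"
  proof -
    have "(norm Qv)^2 = (\<Sum>i\<in>UNIV. (if i \<in> J then (cmod (v$i))^2 else 0))"
      unfolding norm_sq_cvec Qv_def by (rule sum.cong) auto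
    also have "\<dots> \<le> (\<Sum>i\<in>UNIV. de i * (cmod (v$i))^2)"
      by (rule sum_mono) (auto simp: de_def less_imp_le ep)
    also have "\<dots> = Re (wip de v v)" by (simp add: wip_self)
    finally show ?thesis .
  qed
  have h4: "Re (wip de v v) = - \<epsilon> * inner w v" using h1 h2 by (simp add: Re_cinner)
  have h5: "- inner w v \<le> norm w * norm v"
    using norm_cauchy_schwarz[of "-w" v] by simp
  have hQ: "(norm Qv)^2 \<le> \<epsilon> * norm w * norm v"
  proof -
    have "- \<epsilon> * inner w v = \<epsilon> * (- inner w v)" by simp
    also have "\<dots> \<le> \<epsilon> * (norm w * norm v)" using h5 ep by (intro mult_left_mono) auto
    finally show ?thesis using h3 h4 by (simp add: mult.assoc)
  qed
  have h6: "norm v \<le> K * norm Qv" using K vS unfolding Qv_def by blast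
  have a: "(norm v)^2 \<le> K^2 * (norm Qv)^2"
    using power_mono[OF h6, of 2] by (simp add: power_mult_distrib)
  have b: "K^2 * (norm Qv)^2 \<le> K^2 * (\<epsilon> * norm w * norm v)" using hQ by (intro mult_left_mono) auto
  have c: "norm v * norm v \<le> (K^2 * \<epsilon> * norm w) * norm v"
    using a b by (simp add: power2_eq_square mult_ac)
  have "norm v \<le> K^2 * \<epsilon> * norm w"
  proof (cases "norm v = 0")
    case True
    thus ?thesis using ep K0 by simp
  next
    case False
    hence "norm v > 0" by simp
    thus ?thesis using c by (rule mult_right_le_imp_le[rotated])
  qed
  thus ?thesis by (simp add: v_def w_def)
qed



theorem corollary3p7:
  fixes S :: "(complex ^'n) set"
  assumes "csubspace S"
  shows "\<exists>Q. Q \<in> diag_proj \<and> compl_pos (mat_range Q) S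
           \<and> (\<forall>Q'. Q' \<in> diag_proj \<and> compl_pos (mat_range Q') S
                   \<longrightarrow> opnorm (oblique_proj Q' S) \<le> opnorm (oblique_proj Q S))
           \<and> (SUP D\<in>diag_pos. ereal (opnorm (oblique_proj D S))) = ereal (opnorm (oblique_proj Q S))"
proof -
  note S = assms
  define B where "B J = oblique_proj (wdiag (ind J)) S" for J
  have indnn: "\<And>J. \<forall>i. ind J i \<ge> 0" by (simp add: ind_def)
  have Bx: "\<And>J x z. basic S J \<Longrightarrow> LS S (ind J) x z \<Longrightarrow> B J *v x = z"
  proof -
    fix J x z assume bJ: "basic S J" and h: "LS S (ind J) x z"
    show "B J *v x = z" unfolding B_def by (rule oblique_LS[OF S indnn basic_adm[OF bJ] h])
  qed
  have Bsol: "\<And>J x. basic S J \<Longrightarrow> LS S (ind J) x (B J *v x)"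
  proof -
    fix J x assume bJ: "basic S J"
    obtain z where "LS S (ind J) x z" using main_ind[OF S indnn basic_adm[OF bJ], of x] by blast
    thus "LS S (ind J) x (B J *v x)" using Bx[OF bJ] by simp
  qed
  have posadm: "\<And>d. \<forall>i. d i > 0 \<Longrightarrow> adm S d"
  proof -
    fix d :: "'n \<Rightarrow> real" assume d: "\<forall>i. d i > 0"
    show "adm S d" unfolding adm_def
    proof (intro ballI impI)
      fix y :: "complex^'n" assume h: "\<forall>i. d i \<noteq> 0 \<longrightarrow> y$i = 0"
      show "y = 0"
      proof (subst vec_eq_iff, intro allI)
        fix i
        have "d i \<noteq> 0" using d[rule_format, of i] by simp
        hence "y$i = 0" using h by blast
        thus "y$i = 0$i" by simp
      qed
    qed
  qed
  have posnn: "\<And>d::'n \<Rightarrow> real. \<forall>i. d i > 0 \<Longrightarrow> \<forall>i. d i \<ge> 0" by (auto intro: less_imp_le)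
  define JJ where "JJ = {J. basic S J}"
  have fin: "finite JJ" by (rule finite_subset[OF subset_UNIV]) simp
  have ne: "JJ \<noteq> {}"
  proof -
    have p1: "\<forall>i. (\<lambda>_::'n. 1::real) i > 0" by simp
    obtain y where "LS S (\<lambda>_. 1) 0 y \<and> y \<in> convex hull (Bset S 0)"
      using main_ind[OF S posnn[OF p1] posadm[OF p1], of 0] by blast
    hence "Bset S 0 \<noteq> {}" by auto
    thus ?thesis unfolding JJ_def Bset_def by auto
  qed
  define f where "f J = opnorm (B J)" for J
  define C where "C = Max (f ` JJ)"
  have Cin: "C \<in> f ` JJ" unfolding C_def using fin ne by simp
  then obtain J0 where J0: "J0 \<in> JJ" "f J0 = C" by auto
  have Cge: "\<And>J. J \<in> JJ \<Longrightarrow> f J \<le> C" unfolding C_def using fin by simp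
  have bl: "\<And>A::complex^'n^'n. bounded_linear ((*v) A)" by simp
  have Bnorm: "\<And>J x. J \<in> JJ \<Longrightarrow> norm (B J *v x) \<le> C * norm x"
  proof -
    fix J x assume "J \<in> JJ"
    have "norm (B J *v x) \<le> f J * norm x" unfolding f_def opnorm_def by (rule onorm[OF bl])
    also have "\<dots> \<le> C * norm x" using Cge[OF \<open>J \<in> JJ\<close>] by (intro mult_right_mono) auto
    finally show "norm (B J *v x) \<le> C * norm x" .
  qed
  have C0: "C \<ge> 0" unfolding J0(2)[symmetric] f_def opnorm_def by (rule onorm_pos_le[OF bl])
  have upper: "\<And>D. D \<in> diag_pos \<Longrightarrow> opnorm (oblique_proj D S) \<le> C"
  proof -
    fix D :: "complex^'n^'n" assume "D \<in> diag_pos"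
    then obtain d where d: "\<forall>i. d i > 0" "D = wdiag d" using diag_pos_wdiag by blast
    show "opnorm (oblique_proj D S) \<le> C"
      unfolding opnorm_def
    proof (rule onorm_le)
      fix x
      obtain y where y: "LS S d x y" "y \<in> convex hull (Bset S x)"
        using main_ind[OF S posnn[OF d(1)] posadm[OF d(1)], of x] by blast
      have Py: "oblique_proj D S *v x = y" unfolding d(2)
        using oblique_LS[OF S posnn[OF d(1)] posadm[OF d(1)] y(1)] .
      have "Bset S x \<subseteq> cball 0 (C * norm x)"
      proof
        fix z assume "z \<in> Bset S x"
        then obtain J where J: "basic S J" "LS S (ind J) x z" unfolding Bset_def by auto
        have "z = B J *v x" using Bx[OF J] by simp
        hence "norm z \<le> C * norm x" using Bnorm[of J x] J(1) by (simp add: JJ_def)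
        thus "z \<in> cball 0 (C * norm x)" by simp
      qed
      hence "convex hull (Bset S x) \<subseteq> cball 0 (C * norm x)"
        by (rule hull_minimal) (rule convex_cball)
      hence "norm y \<le> C * norm x" using y(2) by auto
      thus "norm (oblique_proj D S *v x) \<le> C * norm x" using Py by simp
    qed
  qed
  have lower: "ereal C \<le> (SUP D\<in>diag_pos. ereal (opnorm (oblique_proj D S)))"
    unfolding le_SUP_iff
  proof (intro allI impI)
    fix r assume r: "r < ereal C"
    show "\<exists>D\<in>diag_pos. r < ereal (opnorm (oblique_proj D S))"
    proof (cases r)
      case MInf
      have "wdiag (\<lambda>_::'n. 1::real) \<in> diag_pos" by (rule wdiag_diag_pos) simp
      thus ?thesis using MInf by (intro bexI[of _ "wdiag (\<lambda>_::'n. 1::real)"]) auto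
    next
      case PInf
      thus ?thesis using r by simp
    next
      case (real r')
      have rC: "r' < C" using r real by simp
      have bJ0: "basic S J0" using J0(1) by (simp add: JJ_def)
      have "\<exists>x. norm (B J0 *v x) > r' * norm x"
      proof (rule ccontr)
        assume "\<not> ?thesis"
        hence "\<And>x. norm (B J0 *v x) \<le> r' * norm x" by (simp add: not_less)
        hence "onorm ((*v) (B J0)) \<le> r'" by (rule onorm_le)
        thus False using rC J0(2) by (simp add: f_def opnorm_def)
      qed
      then obtain x where x: "norm (B J0 *v x) > r' * norm x" by blast
      define z where "z = B J0 *v x"
      have zLS: "LS S (ind J0) x z" unfolding z_def by (rule Bsol[OF bJ0])
      have xnz: "norm x > 0"
      proof (rule ccontr)
        assume "\<not> norm x > 0"
        hence "x = 0" by simp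
        thus False using x by simp
      qed
      define g where "g = norm z - r' * norm x"
      have gpos: "g > 0" using x by (simp add: g_def z_def)
      define w :: "complex^'n" where "w = (\<chi> i. if i \<in> J0 then 0 else (z - x)$i)"
      define \<epsilon> where "\<epsilon> = min 1 (g / (2 * (C^2 * norm w + 1)))"
      have den: "2 * (C^2 * norm w + 1) > 0" by (simp add: add_nonneg_pos)
      have ep: "\<epsilon> > 0" unfolding \<epsilon>_def using gpos den by simp
      have ep2: "\<epsilon> * (2 * (C^2 * norm w + 1)) \<le> g"
      proof -
        have "\<epsilon> \<le> g / (2 * (C^2 * norm w + 1))" unfolding \<epsilon>_def by simp
        thus ?thesis using den by (simp add: le_divide_eq)
      qed
      have small: "C^2 * \<epsilon> * norm w < g"
      proof -
        have "2 * (C^2 * \<epsilon> * norm w) + 2 * \<epsilon> \<le> g" using ep2 by (simp add: algebra_simps)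
        moreover have "C^2 * \<epsilon> * norm w \<ge> 0" using ep by simp
        ultimately show ?thesis using ep gpos by linarith
      qed
      define de where "de = (\<lambda>i. if i \<in> J0 then 1 else \<epsilon>)"
      have depos: "\<forall>i. de i > 0" unfolding de_def using ep by simp
      obtain y where y: "LS S de x y"
        using main_ind[OF S posnn[OF depos] posadm[OF depos], of x] by blast
      have K: "\<forall>s\<in>S. norm s \<le> C * norm ((\<chi> i. if i \<in> J0 then s$i else 0) :: complex^'n)"
      proof
        fix s assume sS: "s \<in> S"
        have "LS S (ind J0) (\<chi> i. if i \<in> J0 then s$i else 0) s"
          by (rule basic_LS_intro) (use sS in auto)
        hence "B J0 *v (\<chi> i. if i \<in> J0 then s$i else 0) = s" by (rule Bx[OF bJ0])
        thus "norm s \<le> C * norm ((\<chi> i. if i \<in> J0 then s$i else 0) :: complex^'n)"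
          using Bnorm[OF J0(1), of "\<chi> i. if i \<in> J0 then s$i else 0"] by simp
      qed
      have yz: "norm (y - z) \<le> C^2 * \<epsilon> * norm w"
        unfolding w_def
        by (rule approx_lemma[OF S bJ0 zLS ep y[unfolded de_def] C0 K])
      have "norm z \<le> norm y + norm (y - z)" by (metis norm_minus_commute norm_triangle_sub)
      hence ny: "norm y > r' * norm x" using yz small by (simp add: g_def)
      define D where "D = wdiag de"
      have Dpos: "D \<in> diag_pos" unfolding D_def by (rule wdiag_diag_pos[OF depos])
      have Py: "oblique_proj D S *v x = y" unfolding D_def
        using oblique_LS[OF S posnn[OF depos] posadm[OF depos] y] .
      have "norm y \<le> opnorm (oblique_proj D S) * norm x"
        unfolding opnorm_def Py[symmetric] by (rule onorm[OF bl])
      hence "r' * norm x < opnorm (oblique_proj D S) * norm x" using ny by simp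
      hence "r' < opnorm (oblique_proj D S)" using xnz by (simp add: mult_less_cancel_right)
      thus ?thesis using Dpos real by auto
    qed
  qed
  have SUPeq: "(SUP D\<in>diag_pos. ereal (opnorm (oblique_proj D S))) = ereal C"
  proof (rule antisym)
    show "(SUP D\<in>diag_pos. ereal (opnorm (oblique_proj D S))) \<le> ereal C"
      by (rule SUP_least) (simp add: upper)
    show "ereal C \<le> (SUP D\<in>diag_pos. ereal (opnorm (oblique_proj D S)))" by (rule lower)
  qed
  define Q where "Q = wdiag (ind J0)"
  have QC: "opnorm (oblique_proj Q S) = C" using J0(2) by (simp add: Q_def f_def B_def)
  show ?thesis
  proof (intro exI conjI allI impI)
    show "Q \<in> diag_proj" unfolding Q_def by (rule wdiag_diag_proj)
    show "compl_pos (mat_range Q) S" unfolding Q_def compl_pos_basic[OF S] using J0(1) by (simp add: JJ_def)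
    show "(SUP D\<in>diag_pos. ereal (opnorm (oblique_proj D S))) = ereal (opnorm (oblique_proj Q S))"
      using SUPeq QC by simp
  next
    fix Q' assume h: "Q' \<in> diag_proj \<and> compl_pos (mat_range Q') S"
    define J' where "J' = {i. Q'$i$i = 1}"
    have Q'eq: "Q' = wdiag (ind J')" unfolding J'_def using h diag_proj_wdiag by blast
    have "basic S J'" using h compl_pos_basic[OF S, of J'] Q'eq by simp
    hence "f J' \<le> C" using Cge by (simp add: JJ_def)
    thus "opnorm (oblique_proj Q' S) \<le> opnorm (oblique_proj Q S)" using QC Q'eq by (simp add: f_def B_def)
  qed
qed


end
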